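(* Let $f:X\to\mathcal G$ be convex and $x_0\in\operatorname{dom} f$. If $x_0$ solves the strict scalarized Stampacchia inequality $$\forall x\in X,\ \forall z^*\in C^-\setminus\{0\}:\ \varphi_{f,z^*}(x_0)=-\infty\ \text{or}\ 0\le\varphi'_{f,z^*}(x_0,x-x_0),$$ then it solves the strict set-valued Stampacchia inequality $0^+f(x_0)\supseteq f'(x_0,x-x_0)$ for all $x\in X$. If additionally the strong regularity condition holds, namely $\varphi_{f'(x,\cdot),z^*}(u)=\varphi'_{f,z^*}(x,u)$ for all $z^*\in C^-\setminus\{0\}$ and all $x,u\in X$, then the reverse implication holds as well.
   Context: $X$ real linear space, $Z$ real locally convex Hausdorff space with dual $Z^*$, $C\subseteq Z$ closed convex cone, $0\in C$, $C^-=\{z^*:z^*(c)\le0\ \forall c\in C\}$, $C^-\setminus\{0\}\ne\emptyset$. $\mathcal G=\{A\subseteq Z: A=\operatorname{cl}\operatorname{co}(A+C)\}$; $A\oplus B=\operatorname{cl}\{a+b\}$, $tA=\{ta\}$ ($t>0$), $A\ominus B=\{z:B+\{z\}\subseteq A\}$; $0^+A=\{z: A+\{z\}\subseteq A\}$ for $A\ne\emptyset$, $0^+\emptyset=\emptyset$. $f$ convex: $f(tx_1+(1-t)x_2)\supseteq tf(x_1)\oplus(1-t)f(x_2)$; $\operatorname{dom}f=\{x:f(x)\ne\emptyset\}$. $f'(x,u)=\bigcap_{t_0>0}\operatorname{cl}\operatorname{co}\bigcup_{0<t<t_0}\frac1t(f(x+tu)\ominus f(x))$. On $\overline{\mathbb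 R}$: inf-addition $\dot+$ ($(-\infty)\dot+(+\infty)=+\infty$), $r\ominus s=\inf\{t\in\mathbb R:r\le s\dot+t\}$ ($\inf\emptyset=+\infty$). $\varphi_{f,z^*}(x)=\inf\{-z^*(z):z\in f(x)\}$ ($+\infty$ if $f(x)=\emptyset$), $\varphi_{f'(x,\cdot),z^*}(u)=\inf\{-z^*(z): z\in f'(x,u)\}$, $\varphi'_{f,z^*}(x,u)=\inf_{t>0}\frac1t(\varphi_{f,z^*}(x+tu)\ominus\varphi_{f,z^*}(x))$. *)

theory Defs
  imports "HOL-Analysis.Analysis"
begin

definition lc_hausdorff_tvs :: "'b::{real_vector,topological_space} itself \<Rightarrow> bool" where
  "lc_hausdorff_tvs _ \<longleftrightarrow>
     continuous_on UNIV (\<lambda>p::'b \<times> 'b. fst p + snd p) \<and>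
     continuous_on UNIV (\<lambda>p::real \<times> 'b. fst p *\<^sub>R snd p) \<and>
     (\<forall>x y::'b. x \<noteq> y \<longrightarrow> (\<exists>U V. open U \<and> open V \<and> x \<in> U \<and> y \<in> V \<and> U \<inter> V = {})) \<and>
     (\<forall>(x::'b) U. open U \<and> x \<in> U \<longrightarrow> (\<exists>V. open V \<and> convex V \<and> x \<in> V \<and> V \<subseteq> U))"

definition topdual :: "('b::{real_vector,topological_space} \<Rightarrow> real) set" where
  "topdual = {zs. linear zs \<and> continuous_on UNIV zs}"

definition negdual :: "'b::{real_vector,topological_space} set \<Rightarrow> ('b \<Rightarrow> real) set" where
  "negdual C = {zs \<in> topdual. \<forall>c\<in>C. zs c \<le> 0}"

definition msum :: "'b::real_vector set \<Rightarrow> 'b set \<Rightarrow> 'b set" where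
  "msum A B = {a + b | a b. a \<in> A \<and> b \<in> B}"

definition cplus :: "'b::{real_vector,topological_space} set \<Rightarrow> 'b set \<Rightarrow> 'b set" where
  "cplus A B = closure (msum A B)"

definition smul :: "real \<Rightarrow> 'b::real_vector set \<Rightarrow> 'b set" where
  "smul t A = (\<lambda>a. t *\<^sub>R a) ` A"

definition iminus :: "'b::real_vector set \<Rightarrow> 'b set \<Rightarrow> 'b set" where
  "iminus A B = {z. msum B {z} \<subseteq> A}"

definition recc :: "'b::real_vector set \<Rightarrow> 'b set" where
  "recc A = (if A = {} then {} else {z. msum A {z} \<subseteq> A})"

definition Gsets :: "'b::{real_vector,topological_space} set \<Rightarrow> 'b set set" where
  "Gsets C = {A. A = closure (convex hull (msum A C))}"

definition convex_sv :: "('a::real_vector \<Rightarrow> 'b::{real_vector,topological_space} set) \<Rightarrow> bool" where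
  "convex_sv f \<longleftrightarrow> (\<forall>x1 x2 t. 0 < t \<and> t < 1 \<longrightarrow>
      cplus (smul t (f x1)) (smul (1 - t) (f x2)) \<subseteq> f (t *\<^sub>R x1 + (1 - t) *\<^sub>R x2))"

definition sv_dir_deriv :: "('a::real_vector \<Rightarrow> 'b::{real_vector,topological_space} set) \<Rightarrow> 'a \<Rightarrow> 'a \<Rightarrow> 'b set" where
  "sv_dir_deriv f x u = (\<Inter>t0\<in>{t0::real. 0 < t0}.
      closure (convex hull (\<Union>t\<in>{t. 0 < t \<and> t < t0}. smul (1 / t) (iminus (f (x + t *\<^sub>R u)) (f x)))))"

definition infadd :: "ereal \<Rightarrow> ereal \<Rightarrow> ereal" where
  "infadd r s = (if r = \<infinity> \<or> s = \<infinity> then \<infinity> else r + s)"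

definition ediff :: "ereal \<Rightarrow> ereal \<Rightarrow> ereal" where
  "ediff r s = Inf (ereal ` {t::real. r \<le> infadd s (ereal t)})"

definition phi_set :: "('b \<Rightarrow> real) \<Rightarrow> 'b set \<Rightarrow> ereal" where
  "phi_set zs A = Inf ((\<lambda>z. ereal (- zs z)) ` A)"

definition phi :: "('a \<Rightarrow> 'b set) \<Rightarrow> ('b \<Rightarrow> real) \<Rightarrow> 'a \<Rightarrow> ereal" where
  "phi f zs x = phi_set zs (f x)"

definition phi_dir_deriv :: "('a::real_vector \<Rightarrow> 'b set) \<Rightarrow> ('b \<Rightarrow> real) \<Rightarrow> 'a \<Rightarrow> 'a \<Rightarrow> ereal" where
  "phi_dir_deriv f zs x u =
     (INF t\<in>{t::real. 0 < t}. ereal (1 / t) * ediff (phi f zs (x + t *\<^sub>R u)) (phi f zs x))"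

end

theory Submission
  imports Defs
begin


definition sublin :: "('a::real_vector \<Rightarrow> real) \<Rightarrow> bool" where
  "sublin p \<longleftrightarrow> (\<forall>x y. p (x + y) \<le> p x + p y) \<and> (\<forall>c x. 0 < c \<longrightarrow> p (c *\<^sub>R x) = c * p x)"

lemma sublin_add: "sublin p \<Longrightarrow> p (x + y) \<le> p x + p y"
  unfolding sublin_def by blast

lemma sublin_hom: "sublin p \<Longrightarrow> 0 < c \<Longrightarrow> p (c *\<^sub>R x) = c * p x"
  unfolding sublin_def by blast

lemma sublin_0: assumes "sublin p" shows "p 0 = 0"
proof -
  have h: "\<forall>c>0. \<forall>x. p (c *\<^sub>R x) = c * p x" using assms unfolding sublin_def by blast
  have "p ((2::real) *\<^sub>R 0) = 2 * p 0" by (rule h[rule_format]) simp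
  thus ?thesis by simp
qed

lemma sublin_lb: assumes "sublin p" shows "- p (- x) \<le> p x"
proof -
  have "p (x + - x) \<le> p x + p (- x)" by (rule sublin_add[OF assms])
  thus ?thesis using sublin_0[OF assms] by simp
qed

definition shiftf :: "('a::real_vector \<Rightarrow> real) \<Rightarrow> 'a \<Rightarrow> 'a \<Rightarrow> real" where
  "shiftf q y x = Inf ((\<lambda>t. q (x + t *\<^sub>R y) - t * q y) ` {0<..})"

lemma shiftf_bdd: assumes "sublin q"
  shows "bdd_below ((\<lambda>t. q (x + t *\<^sub>R y) - t * q y) ` {0<..})"
proof (rule bdd_belowI2[where m="- q (- x)"])
  fix t :: real assume "t \<in> {0<..}"
  hence t: "t > 0" by simp
  have "q (t *\<^sub>R y) = q ((x + t *\<^sub>R y) + - x)" by simp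
  also have "\<dots> \<le> q (x + t *\<^sub>R y) + q (- x)" by (rule sublin_add[OF assms])
  finally show "- q (- x) \<le> q (x + t *\<^sub>R y) - t * q y" using sublin_hom[OF assms t, of y] by linarith
qed

lemma shiftf_le: assumes "sublin q" "t > 0"
  shows "shiftf q y x \<le> q (x + t *\<^sub>R y) - t * q y"
  unfolding shiftf_def using assms by (intro cInf_lower shiftf_bdd) auto

lemma shiftf_ge: assumes "sublin q"
  and "\<And>t. t > 0 \<Longrightarrow> m \<le> q (x + t *\<^sub>R y) - t * q y"
  shows "m \<le> shiftf q y x"
  unfolding shiftf_def using assms by (intro cInf_greatest) auto

lemma shiftf_below: assumes "sublin q" shows "shiftf q y x \<le> q x"
proof -
  have "shiftf q y x \<le> q (x + 1 *\<^sub>R y) - 1 * q y" by (rule shiftf_le[OF assms]) simp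
  also have "\<dots> \<le> q x" using sublin_add[OF assms, of x y] by simp
  finally show ?thesis .
qed

lemma shiftf_sublin: assumes q: "sublin q" shows "sublin (shiftf q y)"
  unfolding sublin_def
proof (intro conjI allI impI)
  fix x1 x2
  have A: "shiftf q y (x1 + x2) - (q (x2 + t2 *\<^sub>R y) - t2 * q y) \<le> q (x1 + t1 *\<^sub>R y) - t1 * q y"
    if "t1 > 0" "t2 > 0" for t1 t2
  proof -
    have "shiftf q y (x1 + x2) \<le> q ((x1 + x2) + (t1 + t2) *\<^sub>R y) - (t1 + t2) * q y"
      using that by (intro shiftf_le[OF q]) auto
    also have "(x1 + x2) + (t1 + t2) *\<^sub>R y = (x1 + t1 *\<^sub>R y) + (x2 + t2 *\<^sub>R y)"
      by (simp add: algebra_simps)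
    also have "q \<dots> \<le> q (x1 + t1 *\<^sub>R y) + q (x2 + t2 *\<^sub>R y)" by (rule sublin_add[OF q])
    finally show ?thesis by (simp add: algebra_simps)
  qed
  have "shiftf q y (x1 + x2) - (q (x2 + t2 *\<^sub>R y) - t2 * q y) \<le> shiftf q y x1" if "t2 > 0" for t2
    by (rule shiftf_ge[OF q]) (use A that in auto)
  hence "shiftf q y (x1 + x2) - shiftf q y x1 \<le> q (x2 + t2 *\<^sub>R y) - t2 * q y" if "t2 > 0" for t2
    using that by force
  hence "shiftf q y (x1 + x2) - shiftf q y x1 \<le> shiftf q y x2"
    by (intro shiftf_ge[OF q])
  thus "shiftf q y (x1 + x2) \<le> shiftf q y x1 + shiftf q y x2" by simp
next
  fix c :: real and x assume c: "0 < c"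
  have "shiftf q y (c *\<^sub>R x) \<le> c * (q (x + s *\<^sub>R y) - s * q y)" if "s > 0" for s
  proof -
    have "shiftf q y (c *\<^sub>R x) \<le> q (c *\<^sub>R x + (c * s) *\<^sub>R y) - (c * s) * q y"
      using that c by (intro shiftf_le[OF q]) auto
    also have "c *\<^sub>R x + (c * s) *\<^sub>R y = c *\<^sub>R (x + s *\<^sub>R y)" by (simp add: algebra_simps)
    also have "q \<dots> = c * q (x + s *\<^sub>R y)" by (rule sublin_hom[OF q c])
    finally show ?thesis by (simp add: algebra_simps)
  qed
  hence "shiftf q y (c *\<^sub>R x) / c \<le> q (x + s *\<^sub>R y) - s * q y" if "s > 0" for s
    using that c by (simp add: divide_le_eq mult.commute)
  hence "shiftf q y (c *\<^sub>R x) / c \<le> shiftf q y x" by (intro shiftf_ge[OF q])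
  hence le: "shiftf q y (c *\<^sub>R x) \<le> c * shiftf q y x" using c by (simp add: divide_le_eq mult.commute)
  have "c * shiftf q y x \<le> q (c *\<^sub>R x + t *\<^sub>R y) - t * q y" if "t > 0" for t
  proof -
    have "shiftf q y x \<le> q (x + (t / c) *\<^sub>R y) - (t / c) * q y"
      using that c by (intro shiftf_le[OF q]) auto
    hence "c * shiftf q y x \<le> c * (q (x + (t / c) *\<^sub>R y) - (t / c) * q y)"
      using c by (simp add: mult_left_mono)
    also have "\<dots> = c * q (x + (t / c) *\<^sub>R y) - t * q y" using c by (simp add: algebra_simps)
    also have "c * q (x + (t / c) *\<^sub>R y) = q (c *\<^sub>R (x + (t / c) *\<^sub>R y))" by (rule sublin_hom[OF q c, symmetric])
    also have "c *\<^sub>R (x + (t / c) *\<^sub>R y) = c *\<^sub>R x + t *\<^sub>R y" using c by (simp add: algebra_simps)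
    finally show ?thesis .
  qed
  hence "c * shiftf q y x \<le> shiftf q y (c *\<^sub>R x)" by (intro shiftf_ge[OF q])
  with le show "shiftf q y (c *\<^sub>R x) = c * shiftf q y x" by simp
qed

lemma sublin_linear:
  assumes q: "sublin q" and add: "\<And>x y. q x + q y \<le> q (x + y)"
  shows "linear q"
proof -
  have a: "q (x + y) = q x + q y" for x y using sublin_add[OF q, of x y] add[of x y] by linarith
  have n: "q (- x) = - q x" for x using a[of x "- x"] sublin_0[OF q] by simp
  show ?thesis
  proof (rule linearI)
    show "q (b1 + b2) = q b1 + q b2" for b1 b2 by (rule a)
    show "q (r *\<^sub>R b) = r *\<^sub>R q b" for r b
    proof -
      consider "r > 0" | "r = 0" | "r < 0" by linarith
      thus ?thesis
      proof cases
        case 1 thus ?thesis using sublin_hom[OF q 1] by simp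
      next
        case 2 thus ?thesis using sublin_0[OF q] by simp
      next
        case 3
        have h: "q ((- r) *\<^sub>R (- b)) = (- r) * q (- b)" using 3
          by (intro sublin_hom[OF q]) simp
        show ?thesis using h n by simp
      qed
    qed
  qed
qed

lemma HB_exists:
  fixes p :: "'a::real_vector \<Rightarrow> real"
  assumes p: "sublin p"
  shows "\<exists>l. linear l \<and> (\<forall>x. l x \<le> p x) \<and> p x0 \<le> l x0"
proof -
  define S where "S = {q. sublin q \<and> (\<forall>x. q x \<le> p x) \<and> q (- x0) \<le> - p x0}"
  define r where "r = {(q1,q2). q1 \<in> S \<and> q2 \<in> S \<and> (\<forall>x. q2 x \<le> q1 x)}"
  have Si: "q \<in> S \<longleftrightarrow> sublin q \<and> (\<forall>x. q x \<le> p x) \<and> q (- x0) \<le> - p x0" for q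
    unfolding S_def by simp
  have ri: "(q1, q2) \<in> r \<longleftrightarrow> q1 \<in> S \<and> q2 \<in> S \<and> (\<forall>x. q2 x \<le> q1 x)" for q1 q2
    unfolding r_def by simp
  have sh: "shiftf q y \<in> S" if "q \<in> S" for q y
  proof -
    have q: "sublin q" "\<forall>x. q x \<le> p x" "q (- x0) \<le> - p x0" using that Si by blast+
    have "shiftf q y x \<le> p x" for x using shiftf_below[OF q(1), of y x] q(2) by (meson order_trans)
    moreover have "shiftf q y (- x0) \<le> - p x0" using shiftf_below[OF q(1), of y "- x0"] q(3) by linarith
    ultimately show ?thesis using Si shiftf_sublin[OF q(1)] by blast
  qed
  have p0: "shiftf p x0 \<in> S"
  proof -
    have "shiftf p x0 (- x0) \<le> p (- x0 + 1 *\<^sub>R x0) - 1 * p x0" by (rule shiftf_le[OF p]) simp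
    hence "shiftf p x0 (- x0) \<le> - p x0" using sublin_0[OF p] by simp
    thus ?thesis using Si shiftf_sublin[OF p] shiftf_below[OF p] by blast
  qed
  have F: "Field r = S"
  proof
    show "Field r \<subseteq> S" unfolding Field_def using ri by blast
    show "S \<subseteq> Field r"
    proof
      fix q assume "q \<in> S" hence "(q, q) \<in> r" using ri by simp
      thus "q \<in> Field r" unfolding Field_def by blast
    qed
  qed
  have r0: "r \<subseteq> S \<times> S" using ri by auto
  have r1: "refl_on S r" by (rule refl_onI) (use ri in auto)
  have r2: "trans r"
  proof (rule transI)
    fix a b c assume "(a, b) \<in> r" "(b, c) \<in> r"
    hence "a \<in> S" "c \<in> S" "\<forall>x. b x \<le> a x" "\<forall>x. c x \<le> b x" using ri by blast+
    thus "(a, c) \<in> r" using ri by (meson order_trans)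
  qed
  have r3: "antisym r"
  proof (rule antisymI)
    fix a b assume "(a, b) \<in> r" "(b, a) \<in> r"
    hence "\<forall>x. a x \<le> b x" "\<forall>x. b x \<le> a x" using ri by blast+
    thus "a = b" by (intro ext) (meson order.antisym)
  qed
  have po: "Partial_order r"
    unfolding partial_order_on_def preorder_on_def F using r0 r1 r2 r3 by blast
  have ub: "\<exists>u\<in>Field r. \<forall>a\<in>C. (a, u) \<in> r" if C: "C \<in> Chains r" for C
  proof (cases "C = {}")
    case True thus ?thesis using p0 F by blast
  next
    case False
    have ch: "(q1, q2) \<in> r \<or> (q2, q1) \<in> r" if "q1 \<in> C" "q2 \<in> C" for q1 q2
      using C that unfolding Chains_def by blast
    have CS: "C \<subseteq> S" using ch ri by blast
    have comp: "(\<forall>x. q2 x \<le> q1 x) \<or> (\<forall>x. q1 x \<le> q2 x)" if "q1 \<in> C" "q2 \<in> C" for q1 q2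
      using ch[OF that] ri by blast
    have Cq: "sublin q \<and> (\<forall>x. q x \<le> p x) \<and> q (- x0) \<le> - p x0" if "q \<in> C" for q
      using that CS Si by blast
    define m where "m x = Inf ((\<lambda>q. q x) ` C)" for x
    have bdd: "bdd_below ((\<lambda>q. q x) ` C)" for x
    proof (rule bdd_belowI2[where m="- p (- x)"])
      fix q assume "q \<in> C"
      hence "sublin q" "q (- x) \<le> p (- x)" using Cq by blast+
      thus "- p (- x) \<le> q x" using sublin_lb[of q x] by linarith
    qed
    have mle: "m x \<le> q x" if "q \<in> C" for q x unfolding m_def using that bdd by (intro cInf_lower) auto
    have mge: "c \<le> m x" if "\<And>q. q \<in> C \<Longrightarrow> c \<le> q x" for c x
      unfolding m_def using that False by (intro cInf_greatest) auto
    have "sublin m" unfolding sublin_def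
    proof (intro conjI allI impI)
      fix x y
      have "m (x + y) - q2 y \<le> q1 x" if "q1 \<in> C" "q2 \<in> C" for q1 q2
      proof -
        from comp[OF that] have "\<exists>q\<in>C. q x \<le> q1 x \<and> q y \<le> q2 y"
        proof
          assume "\<forall>x. q2 x \<le> q1 x" thus ?thesis using that by blast
        next
          assume "\<forall>x. q1 x \<le> q2 x" thus ?thesis using that by blast
        qed
        then obtain q where q: "q \<in> C" "q x \<le> q1 x" "q y \<le> q2 y" by blast
        have "m (x + y) \<le> q (x + y)" by (rule mle[OF q(1)])
        also have "\<dots> \<le> q x + q y" using Cq[OF q(1)] sublin_add by blast
        finally show ?thesis using q by simp
      qed
      hence "m (x + y) - q2 y \<le> m x" if "q2 \<in> C" for q2 using that by (intro mge) auto
      hence "m (x + y) - m x \<le> q2 y" if "q2 \<in> C" for q2 using that by force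
      hence "m (x + y) - m x \<le> m y" by (intro mge)
      thus "m (x + y) \<le> m x + m y" by simp
    next
      fix c :: real and x assume c: "0 < c"
      have e: "q (c *\<^sub>R x) = c * q x" if "q \<in> C" for q using Cq[OF that] c sublin_hom by blast
      have "m (c *\<^sub>R x) / c \<le> q x" if "q \<in> C" for q
        using mle[OF that, of "c *\<^sub>R x"] e[OF that] c by (simp add: divide_le_eq mult.commute)
      hence "m (c *\<^sub>R x) / c \<le> m x" by (intro mge)
      hence 1: "m (c *\<^sub>R x) \<le> c * m x" using c by (simp add: divide_le_eq mult.commute)
      have "c * m x \<le> q (c *\<^sub>R x)" if "q \<in> C" for q
        using mle[OF that, of x] e[OF that] c by (simp add: mult_left_mono)
      hence "c * m x \<le> m (c *\<^sub>R x)" by (intro mge)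
      with 1 show "m (c *\<^sub>R x) = c * m x" by simp
    qed
    moreover obtain q0 where q0: "q0 \<in> C" using False by blast
    have q0p: "\<forall>x. q0 x \<le> p x" "q0 (- x0) \<le> - p x0" using Cq[OF q0] by blast+
    have "m x \<le> p x" for x using mle[OF q0, of x] q0p(1) by (meson order_trans)
    moreover have "m (- x0) \<le> - p x0" using mle[OF q0, of "- x0"] q0p(2) by linarith
    ultimately have mS: "m \<in> S" using Si by blast
    have "\<forall>a\<in>C. (a, m) \<in> r" using mS CS mle ri by blast
    thus ?thesis using mS F by blast
  qed
  obtain l where l: "l \<in> S" and min: "\<And>a. a \<in> S \<Longrightarrow> (l, a) \<in> r \<Longrightarrow> a = l"
    using Zorns_po_lemma[OF po ub] F by metis
  have ls: "sublin l" using l Si by blast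
  have "l x + l y \<le> l (x + y)" for x y
  proof -
    have "(l, shiftf l y) \<in> r" using sh[OF l] l shiftf_below[OF ls] ri by blast
    hence eq: "shiftf l y = l" using min sh[OF l] by blast
    have "shiftf l y x \<le> l (x + 1 *\<^sub>R y) - 1 * l y" by (rule shiftf_le[OF ls]) simp
    thus ?thesis using eq by simp
  qed
  hence lin: "linear l" by (rule sublin_linear[OF ls])
  have "l (- x0) = - l x0" using lin by (simp add: linear_neg)
  moreover have "l (- x0) \<le> - p x0" "\<forall>x. l x \<le> p x" using l Si by blast+
  ultimately show ?thesis using lin by (intro exI[of _ l]) auto
qed



lemma tvs_cont_scale:
  assumes Z: "lc_hausdorff_tvs TYPE('b::{real_vector,topological_space})"
  shows "continuous_on UNIV (\<lambda>y::'b. c *\<^sub>R y)"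
proof -
  have csm: "continuous_on UNIV (\<lambda>p::real \<times> 'b. fst p *\<^sub>R snd p)" using Z unfolding lc_hausdorff_tvs_def by blast
  have 1: "continuous_on UNIV (\<lambda>y::'b. (c, y))" by (intro continuous_on_Pair continuous_on_const continuous_on_id)
  show ?thesis using continuous_on_compose2[OF csm 1] by simp
qed

lemma tvs_cont_add:
  assumes Z: "lc_hausdorff_tvs TYPE('b::{real_vector,topological_space})"
    and f: "continuous_on S (f :: 'c::topological_space \<Rightarrow> 'b)" and g: "continuous_on S g"
  shows "continuous_on S (\<lambda>y. f y + g y)"
proof -
  have cadd: "continuous_on UNIV (\<lambda>p::'b \<times> 'b. fst p + snd p)" using Z unfolding lc_hausdorff_tvs_def by blast
  have 1: "continuous_on S (\<lambda>y. (f y, g y))" by (intro continuous_on_Pair f g)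
  show ?thesis using continuous_on_compose2[OF cadd 1] by simp
qed

lemma tvs_cont_aff:
  assumes Z: "lc_hausdorff_tvs TYPE('b::{real_vector,topological_space})"
  shows "continuous_on UNIV (\<lambda>y::'b. c *\<^sub>R y + v)"
  by (rule tvs_cont_add[OF Z tvs_cont_scale[OF Z] continuous_on_const])

lemma tvs_cont_line:
  assumes Z: "lc_hausdorff_tvs TYPE('b::{real_vector,topological_space})"
  shows "continuous_on UNIV (\<lambda>s::real. s *\<^sub>R (x::'b) + v)"
proof -
  have csm: "continuous_on UNIV (\<lambda>p::real \<times> 'b. fst p *\<^sub>R snd p)" using Z unfolding lc_hausdorff_tvs_def by blast
  have 1: "continuous_on UNIV (\<lambda>s::real. (s, x))" by (intro continuous_on_Pair continuous_on_const continuous_on_id)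
  have "continuous_on UNIV (\<lambda>s::real. s *\<^sub>R x)" using continuous_on_compose2[OF csm 1] by simp
  thus ?thesis by (rule tvs_cont_add[OF Z _ continuous_on_const])
qed

lemma tvs_open_aff:
  assumes Z: "lc_hausdorff_tvs TYPE('b::{real_vector,topological_space})" and S: "open S"
  shows "open {y::'b. c *\<^sub>R y + v \<in> S}"
proof -
  have "open ((\<lambda>y::'b. c *\<^sub>R y + v) -` S \<inter> UNIV)"
    using continuous_on_open_vimage[OF open_UNIV] tvs_cont_aff[OF Z] S by blast
  thus ?thesis by (simp add: vimage_def)
qed

lemma tvs_absorb:
  assumes Z: "lc_hausdorff_tvs TYPE('b::{real_vector,topological_space})" and S: "open S" and p: "p \<in> S"
  shows "\<exists>d>0. \<forall>s. \<bar>s\<bar> < d \<longrightarrow> s *\<^sub>R (x::'b) + p \<in> S"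
proof -
  have "open ((\<lambda>s::real. s *\<^sub>R x + p) -` S \<inter> UNIV)"
    using continuous_on_open_vimage[OF open_UNIV] tvs_cont_line[OF Z] S by blast
  hence o: "open {s::real. s *\<^sub>R x + p \<in> S}" by (simp add: vimage_def)
  have "(0::real) \<in> {s::real. s *\<^sub>R x + p \<in> S}" using p by simp
  then obtain e where "e > 0" "\<forall>y. dist y 0 < e \<longrightarrow> y \<in> {s::real. s *\<^sub>R x + p \<in> S}"
    using o unfolding open_dist by blast
  thus ?thesis by (intro exI[of _ e]) (auto simp: dist_real_def)
qed

lemma tvs_closure_convex:
  assumes Z: "lc_hausdorff_tvs TYPE('b::{real_vector,topological_space})" and K: "convex (K::'b set)"
  shows "convex (closure K)"
proof (rule convexI)
  fix x y and u v :: real assume xy: "x \<in> closure K" "y \<in> closure K" and uv: "0 \<le> u" "0 \<le> v" "u + v = 1"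
  define g where "g = (\<lambda>p::'b \<times> 'b. u *\<^sub>R fst p + v *\<^sub>R snd p)"
  have c1: "continuous_on UNIV (\<lambda>p::'b \<times> 'b. u *\<^sub>R fst p)"
    using continuous_on_compose2[OF tvs_cont_scale[OF Z] continuous_on_fst[OF continuous_on_id]] by simp
  have c2: "continuous_on UNIV (\<lambda>p::'b \<times> 'b. v *\<^sub>R snd p)"
    using continuous_on_compose2[OF tvs_cont_scale[OF Z] continuous_on_snd[OF continuous_on_id]] by simp
  have gc: "continuous_on UNIV g" unfolding g_def by (rule tvs_cont_add[OF Z c1 c2])
  have "closed (g -` closure K \<inter> UNIV)"
    using continuous_on_closed_vimage[OF closed_UNIV] gc by blast
  hence cl: "closed (g -` closure K)" by simp
  have "K \<times> K \<subseteq> g -` closure K"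
  proof
    fix p assume "p \<in> K \<times> K"
    hence "fst p \<in> K" "snd p \<in> K" by auto
    hence "g p \<in> K" unfolding g_def using convexD[OF K _ _ uv] by blast
    thus "p \<in> g -` closure K" using closure_subset by blast
  qed
  hence "closure (K \<times> K) \<subseteq> g -` closure K" by (rule closure_minimal[OF _ cl])
  hence "closure K \<times> closure K \<subseteq> g -` closure K" by (simp add: closure_Times)
  thus "u *\<^sub>R x + v *\<^sub>R y \<in> closure K" using xy unfolding g_def by auto
qed

definition mgauge :: "'b::real_vector set \<Rightarrow> 'b \<Rightarrow> real" where
  "mgauge D x = Inf {t. 0 < t \<and> (1 / t) *\<^sub>R x \<in> D}"

lemma mgauge_props:
  assumes Z: "lc_hausdorff_tvs TYPE('b::{real_vector,topological_space})"
    and D: "open D" "convex (D::'b set)" "0 \<in> D"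
  shows "sublin (mgauge D)" "\<And>x. x \<in> D \<Longrightarrow> mgauge D x \<le> 1" "\<And>x. x \<notin> D \<Longrightarrow> 1 \<le> mgauge D x"
proof -
  define T where "T x = {t. 0 < t \<and> (1 / t) *\<^sub>R x \<in> D}" for x
  have gT: "mgauge D x = Inf (T x)" for x unfolding mgauge_def T_def ..
  have ne: "T x \<noteq> {}" for x
  proof -
    obtain d where d: "d > 0" "\<forall>s. \<bar>s\<bar> < d \<longrightarrow> s *\<^sub>R x + 0 \<in> D" using tvs_absorb[OF Z D(1) D(3)] by blast
    hence "(d / 2) *\<^sub>R x \<in> D" by simp
    hence "2 / d \<in> T x" unfolding T_def using d by simp
    thus ?thesis by blast
  qed
  have bdd: "bdd_below (T x)" for x unfolding T_def by (rule bdd_belowI[of _ 0]) auto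
  have low: "mgauge D x \<le> t" if "t \<in> T x" for x t unfolding gT using that bdd by (rule cInf_lower)
  have grt: "c \<le> mgauge D x" if "\<And>t. t \<in> T x \<Longrightarrow> c \<le> t" for c x
    unfolding gT using ne that by (rule cInf_greatest)
  have mono: "t' \<in> T x" if "t \<in> T x" "t \<le> t'" for t t' x
  proof -
    have t: "0 < t" "(1 / t) *\<^sub>R x \<in> D" using that unfolding T_def by auto
    have "(t / t') *\<^sub>R ((1 / t) *\<^sub>R x) + (1 - t / t') *\<^sub>R 0 \<in> D"
      using t that by (intro convexD[OF D(2) _ D(3)]) auto
    moreover have "(t / t') *\<^sub>R ((1 / t) *\<^sub>R x) = (1 / t') *\<^sub>R x" using t by simp
    ultimately show ?thesis using t that unfolding T_def by auto
  qed
  show "sublin (mgauge D)" unfolding sublin_def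
  proof (intro conjI allI impI)
    fix x y
    have sum: "s + t \<in> T (x + y)" if "s \<in> T x" "t \<in> T y" for s t
    proof -
      have st: "0 < s" "(1 / s) *\<^sub>R x \<in> D" "0 < t" "(1 / t) *\<^sub>R y \<in> D" using that unfolding T_def by auto
      have "(s / (s + t)) *\<^sub>R ((1 / s) *\<^sub>R x) + (t / (s + t)) *\<^sub>R ((1 / t) *\<^sub>R y) \<in> D"
        using st by (intro convexD[OF D(2)]) (auto simp: add_divide_distrib[symmetric])
      moreover have "(s / (s + t)) *\<^sub>R ((1 / s) *\<^sub>R x) + (t / (s + t)) *\<^sub>R ((1 / t) *\<^sub>R y) = (1 / (s + t)) *\<^sub>R (x + y)"
        using st by (simp add: scaleR_add_right)
      ultimately show ?thesis using st unfolding T_def by auto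
    qed
    have "mgauge D (x + y) - t \<le> mgauge D x" if "t \<in> T y" for t
    proof (rule grt)
      fix s assume "s \<in> T x"
      from low[OF sum[OF this that]] show "mgauge D (x + y) - t \<le> s" by linarith
    qed
    hence "mgauge D (x + y) - mgauge D x \<le> t" if "t \<in> T y" for t using that by fastforce
    hence "mgauge D (x + y) - mgauge D x \<le> mgauge D y" by (rule grt)
    thus "mgauge D (x + y) \<le> mgauge D x + mgauge D y" by simp
  next
    fix c :: real and x assume c: "0 < c"
    have "mgauge D (c *\<^sub>R x) / c \<le> t" if "t \<in> T x" for t
    proof -
      have "c * t \<in> T (c *\<^sub>R x)" using that c unfolding T_def by auto
      thus ?thesis using low c by (simp add: divide_le_eq mult.commute)
    qed
    hence "mgauge D (c *\<^sub>R x) / c \<le> mgauge D x" by (intro grt)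
    hence 1: "mgauge D (c *\<^sub>R x) \<le> c * mgauge D x" using c by (simp add: divide_le_eq mult.commute)
    have "mgauge D x \<le> t / c" if "t \<in> T (c *\<^sub>R x)" for t
    proof -
      have "t / c \<in> T x" using that c unfolding T_def by auto
      thus ?thesis by (rule low)
    qed
    hence "c * mgauge D x \<le> t" if "t \<in> T (c *\<^sub>R x)" for t using that c by (simp add: le_divide_eq mult.commute)
    hence "c * mgauge D x \<le> mgauge D (c *\<^sub>R x)" by (intro grt)
    with 1 show "mgauge D (c *\<^sub>R x) = c * mgauge D x" by simp
  qed
  show "mgauge D x \<le> 1" if "x \<in> D" for x using that by (intro low) (simp add: T_def)
  show "1 \<le> mgauge D x" if x: "x \<notin> D" for x
  proof (rule ccontr)
    assume "\<not> 1 \<le> mgauge D x"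
    hence "Inf (T x) < 1" using gT by simp
    then obtain t where t: "t \<in> T x" "t < 1" using cInf_less_iff[OF ne bdd] by blast
    have t': "0 < t" "(1 / t) *\<^sub>R x \<in> D" using t unfolding T_def by auto
    have "t *\<^sub>R ((1 / t) *\<^sub>R x) + (1 - t) *\<^sub>R 0 \<in> D" using t t' by (intro convexD[OF D(2) _ D(3)]) auto
    thus False using x t' by simp
  qed
qed



lemma separation:
  fixes A :: "'b::{real_vector,topological_space} set" and b :: 'b
  assumes Z: "lc_hausdorff_tvs TYPE('b)" and A: "closed A" "convex A" "A \<noteq> {}" and b: "b \<notin> A"
  shows "\<exists>(l::'b \<Rightarrow> real) s. linear l \<and> continuous_on UNIV l \<and> s > 0 \<and> (\<forall>a\<in>A. l a \<le> l b - s)"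
proof -
  have lc: "\<forall>(x::'b) U. open U \<and> x \<in> U \<longrightarrow> (\<exists>V. open V \<and> convex V \<and> x \<in> V \<and> V \<subseteq> U)"
    using Z unfolding lc_hausdorff_tvs_def by blast
  have "open (- A)" using A(1) by (simp add: open_Compl)
  then obtain V where V: "open V" "convex V" "b \<in> V" "V \<subseteq> - A" using lc b by blast
  define W where "W = {w. b + w \<in> V \<and> b - w \<in> V}"
  have "W = {w. 1 *\<^sub>R w + b \<in> V} \<inter> {w. (- 1) *\<^sub>R w + b \<in> V}" unfolding W_def by (auto simp: algebra_simps)
  hence oW: "open W" by (simp only:) (intro open_Int tvs_open_aff[OF Z V(1)])
  have cW: "convex W"
  proof (rule convexI)
    fix w1 w2 and u v :: real assume w: "w1 \<in> W" "w2 \<in> W" and uv: "0 \<le> u" "0 \<le> v" "u + v = 1"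
    have hb: "b = u *\<^sub>R b + v *\<^sub>R b" using uv(3) by (metis scaleR_add_left scaleR_one)
    have e1: "b + (u *\<^sub>R w1 + v *\<^sub>R w2) = u *\<^sub>R (b + w1) + v *\<^sub>R (b + w2)"
      by (subst hb) (simp add: algebra_simps)
    have e2: "b - (u *\<^sub>R w1 + v *\<^sub>R w2) = u *\<^sub>R (b - w1) + v *\<^sub>R (b - w2)"
      by (subst hb) (simp add: algebra_simps)
    show "u *\<^sub>R w1 + v *\<^sub>R w2 \<in> W" unfolding W_def using w uv e1 e2 convexD[OF V(2)]
      unfolding W_def by auto
  qed
  have W0: "0 \<in> W" unfolding W_def using V by simp
  obtain a0 where a0: "a0 \<in> A" using A(3) by blast
  define e0 where "e0 = a0 - b"
  define D where "D = {x. \<exists>a\<in>A. x + (b + e0 - a) \<in> W}"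
  have "D = (\<Union>a\<in>A. {x. 1 *\<^sub>R x + (b + e0 - a) \<in> W})" unfolding D_def by auto
  hence oD: "open D" by (simp only:) (intro open_UN ballI tvs_open_aff[OF Z oW])
  have cD: "convex D"
  proof (rule convexI)
    fix x1 x2 and u v :: real assume x: "x1 \<in> D" "x2 \<in> D" and uv: "0 \<le> u" "0 \<le> v" "u + v = 1"
    obtain a1 where a1: "a1 \<in> A" "x1 + (b + e0 - a1) \<in> W" using x(1) unfolding D_def by blast
    obtain a2 where a2: "a2 \<in> A" "x2 + (b + e0 - a2) \<in> W" using x(2) unfolding D_def by blast
    define c where "c = b + e0"
    have hc: "c = u *\<^sub>R c + v *\<^sub>R c" using uv(3) by (metis scaleR_add_left scaleR_one)
    have e: "(u *\<^sub>R x1 + v *\<^sub>R x2) + (c - (u *\<^sub>R a1 + v *\<^sub>R a2))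
        = u *\<^sub>R (x1 + (c - a1)) + v *\<^sub>R (x2 + (c - a2))"
      by (subst hc) (simp add: algebra_simps)
    have "u *\<^sub>R (x1 + (c - a1)) + v *\<^sub>R (x2 + (c - a2)) \<in> W"
      using a1 a2 uv unfolding c_def by (intro convexD[OF cW]) (auto simp: algebra_simps)
    moreover have "u *\<^sub>R a1 + v *\<^sub>R a2 \<in> A" using a1 a2 uv by (intro convexD[OF A(2)])
    ultimately show "u *\<^sub>R x1 + v *\<^sub>R x2 \<in> D" unfolding D_def using e unfolding c_def
      by (metis (no_types, lifting) add_diff_eq mem_Collect_eq)
  qed
  have D0: "0 \<in> D" unfolding D_def e0_def using a0 W0 by force
  have De: "- e0 \<notin> D"
  proof
    assume "- e0 \<in> D"
    then obtain a where a: "a \<in> A" "- e0 + (b + e0 - a) \<in> W" unfolding D_def by blast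
    hence "b - (b - a) \<in> V" unfolding W_def by (simp add: algebra_simps)
    thus False using a V(4) by auto
  qed
  note g = mgauge_props[OF Z oD cD D0]
  obtain l where l: "linear l" "\<forall>x. l x \<le> mgauge D x" "mgauge D (- e0) \<le> l (- e0)"
    using HB_exists[OF g(1)] by blast
  have l1: "1 \<le> l (- e0)" using g(3)[OF De] l(3) by linarith
  have lD: "l x \<le> 1" if "x \<in> D" for x using l(2) g(2)[OF that] by (meson order_trans)
  obtain d where d: "d > 0" "\<forall>s. \<bar>s\<bar> < d \<longrightarrow> s *\<^sub>R (- e0) + 0 \<in> W"
    using tvs_absorb[OF Z oW W0] by blast
  define s where "s = d / 2"
  have s: "s > 0" "s *\<^sub>R (- e0) \<in> W" using d unfolding s_def by auto
  have sep: "l a \<le> l b - s" if a: "a \<in> A" for a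
  proof -
    define x where "x = a - b + s *\<^sub>R (- e0) - e0"
    have "x + (b + e0 - a) = s *\<^sub>R (- e0)" unfolding x_def by (simp add: algebra_simps)
    hence "x + (b + e0 - a) \<in> W" using s(2) by simp
    hence "x \<in> D" unfolding D_def using a by blast
    hence "l x \<le> 1" by (rule lD)
    moreover have "l x = l a - l b + s * l (- e0) + l (- e0)" unfolding x_def
      using l(1) by (simp add: linear_add linear_diff linear_scale linear_neg)
    moreover have "s \<le> s * l (- e0)" using l1 s(1) by simp
    ultimately show ?thesis using l1 by linarith
  qed
  have cont: "continuous_on UNIV l" unfolding continuous_on_topological
  proof (intro ballI allI impI)
    fix x0 :: 'b and B :: "real set" assume B: "open B" "l x0 \<in> B"
    then obtain e where e: "e > 0" "\<forall>y. dist y (l x0) < e \<longrightarrow> y \<in> B" unfolding open_dist by blast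
    define N where "N = {y. y \<in> D \<and> - y \<in> D}"
    have "N = D \<inter> {y. (- 1) *\<^sub>R y + 0 \<in> D}" unfolding N_def by auto
    hence oN: "open N" by (simp only:) (intro open_Int oD tvs_open_aff[OF Z oD])
    have lN: "\<bar>l y\<bar> \<le> 1" if "y \<in> N" for y
    proof -
      have "l y \<le> 1" "l (- y) \<le> 1" using that lD unfolding N_def by auto
      moreover have "l (- y) = - l y" using l(1) by (simp add: linear_neg)
      ultimately show ?thesis by linarith
    qed
    define T where "T = {y. (2 / e) *\<^sub>R y + (- ((2 / e) *\<^sub>R x0)) \<in> N}"
    have oT: "open T" unfolding T_def by (rule tvs_open_aff[OF Z oN])
    have xT: "x0 \<in> T" unfolding T_def N_def using D0 by simp
    have "l y \<in> B" if "y \<in> T" for y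
    proof -
      have "\<bar>l ((2 / e) *\<^sub>R y + (- ((2 / e) *\<^sub>R x0)))\<bar> \<le> 1" using lN that unfolding T_def by blast
      moreover have "l ((2 / e) *\<^sub>R y + (- ((2 / e) *\<^sub>R x0))) = (2 / e) * (l y - l x0)"
        using l(1) by (simp add: linear_diff linear_scale right_diff_distrib)
      ultimately have "\<bar>(2 / e) * (l y - l x0)\<bar> \<le> 1" by simp
      hence "\<bar>l y - l x0\<bar> \<le> e / 2" using e(1) by (auto simp: abs_if field_simps split: if_splits)
      hence "dist (l y) (l x0) < e" using e(1) by (simp add: dist_real_def)
      thus ?thesis using e(2) by blast
    qed
    thus "\<exists>A. open A \<and> x0 \<in> A \<and> (\<forall>y\<in>UNIV. y \<in> A \<longrightarrow> l y \<in> B)" using oT xT by blast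
  qed
  have "linear l" by (rule l(1))
  moreover have "continuous_on UNIV l" by (rule cont)
  moreover have "0 < s" by (rule s(1))
  moreover have "\<forall>a\<in>A. l a \<le> l b - s" using sep by blast
  ultimately show ?thesis by blast
qed



lemma lin_add_r: "linear (l::'b::real_vector \<Rightarrow> real) \<Longrightarrow> l (x + y) = l x + l y"
  by (rule linear_add)

lemma lin_scale_r: "linear (l::'b::real_vector \<Rightarrow> real) \<Longrightarrow> l (c *\<^sub>R x) = c * l x"
  using linear_scale[of l c x] by simp

lemma msum_mem: "a \<in> A \<Longrightarrow> b \<in> B \<Longrightarrow> a + b \<in> msum A B"
  unfolding msum_def by blast

lemma recc_iter:
  assumes "A \<noteq> {}" "z \<in> recc A" "a \<in> A"
  shows "a + real n *\<^sub>R z \<in> A"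
proof (induction n)
  case 0 thus ?case using assms by simp
next
  case (Suc n)
  have sub: "msum A {z} \<subseteq> A" using assms unfolding recc_def by simp
  have "(a + real n *\<^sub>R z) + z \<in> msum A {z}" using Suc by (intro msum_mem) auto
  hence "(a + real n *\<^sub>R z) + z \<in> A" using sub by blast
  moreover have "(a + real n *\<^sub>R z) + z = a + real (Suc n) *\<^sub>R z" by (simp add: algebra_simps)
  ultimately show ?case by simp
qed

lemma part2_aux:
  fixes zs :: "'b::real_vector \<Rightarrow> real"
  assumes l: "linear zs" and A: "A \<noteq> {}" and fin: "phi_set zs A \<noteq> - \<infinity>" and S: "S \<subseteq> recc A"
  shows "0 \<le> phi_set zs S"
  unfolding phi_set_def
proof (rule Inf_greatest)
  fix e assume "e \<in> (\<lambda>z. ereal (- zs z)) ` S"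
  then obtain z where z: "z \<in> S" "e = ereal (- zs z)" by blast
  obtain a where a: "a \<in> A" using A by blast
  have low: "phi_set zs A \<le> ereal (- zs a') " if "a' \<in> A" for a'
    unfolding phi_set_def using that by (intro Inf_lower) auto
  obtain r where r: "phi_set zs A = ereal r"
    using fin low[OF a] by (cases "phi_set zs A") auto
  have rn: "r \<le> - zs a - real n * zs z" for n
  proof -
    have "a + real n *\<^sub>R z \<in> A" using recc_iter[OF A _ a] z S by blast
    hence "ereal r \<le> ereal (- zs (a + real n *\<^sub>R z))" using low r by metis
    thus ?thesis using lin_add_r[OF l] lin_scale_r[OF l] by simp
  qed
  have "zs z \<le> 0"
  proof (rule ccontr)
    assume "\<not> zs z \<le> 0"
    hence pos: "zs z > 0" by simp
    obtain n where n: "(- zs a - r) / zs z < real n" using reals_Archimedean2 by blast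
    hence "- zs a - r < real n * zs z" using pos by (simp add: divide_less_eq)
    thus False using rn[of n] by linarith
  qed
  thus "0 \<le> e" using z by simp
qed

lemma deriv_bound:
  fixes f :: "'a::real_vector \<Rightarrow> 'b::{real_vector,topological_space} set" and l :: "'b \<Rightarrow> real"
  assumes l: "linear l" "continuous_on UNIV l" and r: "phi f l x0 = ereal r"
    and z: "z \<in> sv_dir_deriv f x0 u"
  shows "phi_dir_deriv f l x0 u \<le> ereal (- l z)"
proof -
  define P where "P = phi_dir_deriv f l x0 u"
  define H where "H = {w. P \<le> ereal (- l w)}"
  have "continuous_on UNIV (\<lambda>w. ereal (- l w))" by (intro continuous_on_ereal continuous_on_minus l(2))
  hence "closed ((\<lambda>w. ereal (- l w)) -` {P..} \<inter> UNIV)"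
    using continuous_on_closed_vimage[OF closed_UNIV] closed_atLeast by blast
  moreover have "(\<lambda>w. ereal (- l w)) -` {P..} \<inter> UNIV = H" unfolding H_def by auto
  ultimately have cH: "closed H" by simp
  have vH: "convex H"
  proof (rule convexI)
    fix w1 w2 and u v :: real assume w: "w1 \<in> H" "w2 \<in> H" and uv: "0 \<le> u" "0 \<le> v" "u + v = 1"
    have e: "- l (u *\<^sub>R w1 + v *\<^sub>R w2) = u * (- l w1) + v * (- l w2)"
      using lin_add_r[OF l(1)] lin_scale_r[OF l(1)] by simp
    show "u *\<^sub>R w1 + v *\<^sub>R w2 \<in> H"
    proof (cases P)
      case (real p)
      have "p \<le> - l w1" "p \<le> - l w2" using w real unfolding H_def by auto
      hence "u * p + v * p \<le> u * (- l w1) + v * (- l w2)" using uv by (intro add_mono mult_left_mono) auto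
      moreover have "u * p + v * p = p" using uv(3) by (metis distrib_right mult_1)
      ultimately show ?thesis using e real unfolding H_def by simp
    next
      case PInf thus ?thesis using w unfolding H_def by simp
    next
      case MInf thus ?thesis unfolding H_def by simp
    qed
  qed
  have ne: "f x0 \<noteq> {}"
  proof
    assume "f x0 = {}"
    hence "phi f l x0 = \<infinity>" unfolding phi_def phi_set_def by (simp add: top_ereal_def)
    thus False using r by simp
  qed
  then obtain a where a: "a \<in> f x0" by blast
  have Ulow: "phi f l x0 \<le> ereal (- l a')" if "a' \<in> f x0" for a'
    unfolding phi_def phi_set_def using that by (intro Inf_lower) auto
  have mem: "w \<in> H" if t: "0 < t" and w: "w \<in> smul (1 / t) (iminus (f (x0 + t *\<^sub>R u)) (f x0))" for t w
  proof -
    obtain y where y: "w = (1 / t) *\<^sub>R y" "msum (f x0) {y} \<subseteq> f (x0 + t *\<^sub>R u)"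
      using w unfolding smul_def iminus_def by blast
    define \<psi> where "\<psi> = phi f l (x0 + t *\<^sub>R u)"
    have psi_le: "\<psi> \<le> ereal (- l a' - l y)" if "a' \<in> f x0" for a'
    proof -
      have "a' + y \<in> f (x0 + t *\<^sub>R u)" using y(2) msum_mem[OF that, of y "{y}"] by blast
      hence "\<psi> \<le> ereal (- l (a' + y))" unfolding \<psi>_def phi_def phi_set_def by (intro Inf_lower) auto
      thus ?thesis using lin_add_r[OF l(1)] by simp
    qed
    have psi_r: "\<psi> \<le> ereal (r - l y)"
    proof (cases \<psi>)
      case (real q)
      have "ereal (q + l y) \<le> ereal (- l a')" if "a' \<in> f x0" for a'
        using psi_le[OF that] real by simp
      hence "ereal (q + l y) \<le> phi f l x0" unfolding phi_def phi_set_def by (intro Inf_greatest) auto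
      thus ?thesis using r real by simp
    next
      case PInf thus ?thesis using psi_le[OF a] by simp
    next
      case MInf thus ?thesis by simp
    qed
    have ed: "ediff \<psi> (phi f l x0) \<le> ereal (- l y)"
      unfolding ediff_def r
    proof (rule Inf_lower)
      have "\<psi> \<le> infadd (ereal r) (ereal (- l y))" using psi_r unfolding infadd_def by simp
      thus "ereal (- l y) \<in> ereal ` {s. \<psi> \<le> infadd (ereal r) (ereal s)}" by blast
    qed
    have "P \<le> ereal (1 / t) * ediff (phi f l (x0 + t *\<^sub>R u)) (phi f l x0)"
      unfolding P_def phi_dir_deriv_def using t by (intro INF_lower) simp
    also have "\<dots> \<le> ereal (1 / t) * ereal (- l y)" using ed t unfolding \<psi>_def
      by (intro ereal_mult_left_mono) auto
    also have "\<dots> = ereal (- l w)" using y(1) lin_scale_r[OF l(1)] by simp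
    finally show ?thesis unfolding H_def by simp
  qed
  define U where "U = (\<Union>t\<in>{t. 0 < t \<and> t < (1::real)}. smul (1 / t) (iminus (f (x0 + t *\<^sub>R u)) (f x0)))"
  have "U \<subseteq> H" unfolding U_def using mem by blast
  hence "convex hull U \<subseteq> H" using vH by (intro hull_minimal)
  hence "closure (convex hull U) \<subseteq> H" using cH by (intro closure_minimal)
  moreover have "z \<in> closure (convex hull U)" using z unfolding sv_dir_deriv_def U_def by auto
  ultimately show ?thesis unfolding H_def P_def by blast
qed



theorem mainTheorem10:
  fixes f :: "'a::real_vector \<Rightarrow> 'b::{real_vector,topological_space} set"
    and C :: "'b set"
    and x0 :: 'a
  assumes Z: "lc_hausdorff_tvs TYPE('b)"
    and C_closed: "closed C" and C_convex: "convex C" and C_cone: "cone C" and C0: "0 \<in> C"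
    and Cneg: "negdual C - {(\<lambda>_. 0)} \<noteq> {}"
    and fG: "\<forall>x. f x \<in> Gsets C"
    and fconv: "convex_sv f"
    and x0dom: "f x0 \<noteq> {}"
  shows "((\<forall>x. \<forall>zs \<in> negdual C - {(\<lambda>_. 0)}.
             phi f zs x0 = - \<infinity> \<or> 0 \<le> phi_dir_deriv f zs x0 (x - x0))
          \<longrightarrow> (\<forall>x. sv_dir_deriv f x0 (x - x0) \<subseteq> recc (f x0)))
       \<and> ((\<forall>zs \<in> negdual C - {(\<lambda>_. 0)}. \<forall>x u.
             phi_set zs (sv_dir_deriv f x u) = phi_dir_deriv f zs x u)
          \<longrightarrow> (\<forall>x. sv_dir_deriv f x0 (x - x0) \<subseteq> recc (f x0))
          \<longrightarrow> (\<forall>x. \<forall>zs \<in> negdual C - {(\<lambda>_. 0)}.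
                 phi f zs x0 = - \<infinity> \<or> 0 \<le> phi_dir_deriv f zs x0 (x - x0)))"
proof (intro conjI impI allI ballI)
  define A where "A = f x0"
  have "f x0 \<in> Gsets C" using fG by (rule spec)
  hence AG0: "f x0 = closure (convex hull (msum (f x0) C))" unfolding Gsets_def mem_Collect_eq .
  have AG: "A = closure (convex hull (msum A C))" unfolding A_def by (rule AG0)
  have sub: "msum A C \<subseteq> closure (convex hull (msum A C))"
    by (rule order_trans[OF hull_subset closure_subset])
  have AC: "a + c \<in> A" if "a \<in> A" "c \<in> C" for a c
  proof -
    have "a + c \<in> msum A C" using that by (rule msum_mem)
    hence h: "a + c \<in> closure (convex hull (msum A C))" by (rule subsetD[OF sub])
    show ?thesis by (subst AG) (rule h)
  qed
  have clA: "closed A" by (subst AG) (rule closed_closure)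
  have cvA: "convex A" by (subst AG) (rule tvs_closure_convex[OF Z convex_convex_hull])
  have neA: "A \<noteq> {}" using x0dom unfolding A_def .
  have reccA: "recc A = {z. msum A {z} \<subseteq> A}" using neA unfolding recc_def by simp
  {
    assume H: "\<forall>x. \<forall>zs \<in> negdual C - {(\<lambda>_. 0)}.
             phi f zs x0 = - \<infinity> \<or> 0 \<le> phi_dir_deriv f zs x0 (x - x0)"
    fix x
    show "sv_dir_deriv f x0 (x - x0) \<subseteq> recc (f x0)"
    proof
      fix z assume z: "z \<in> sv_dir_deriv f x0 (x - x0)"
      show "z \<in> recc (f x0)"
        unfolding A_def[symmetric] reccA
      proof (safe)
        fix p assume "p \<in> msum A {z}"
        then obtain a where a: "a \<in> A" "p = a + z" unfolding msum_def by blast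
        show "p \<in> A"
        proof (rule ccontr)
          assume "p \<notin> A"
          then obtain l s where l: "linear (l::'b \<Rightarrow> real)" "continuous_on UNIV l" "s > 0"
              "\<forall>a'\<in>A. l a' \<le> l p - s"
            using separation[OF Z clA cvA neA] by blast
          have lC: "l c \<le> 0" if c: "c \<in> C" for c
          proof (rule ccontr)
            assume "\<not> l c \<le> 0"
            hence pos: "l c > 0" by simp
            obtain n where n: "(l p - s - l a) / l c < real n" using reals_Archimedean2 by blast
            hence lt: "l p - s - l a < real n * l c" using pos by (simp add: divide_less_eq)
            have "real n *\<^sub>R c \<in> C" using C_cone c unfolding cone_def by simp
            hence "a + real n *\<^sub>R c \<in> A" using AC a(1) by blast
            hence "l (a + real n *\<^sub>R c) \<le> l p - s" using l(4) by blast
            thus False using lt lin_add_r[OF l(1)] lin_scale_r[OF l(1)] by simp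
          qed
          have lneg: "l \<in> negdual C - {(\<lambda>_. 0)}"
          proof -
            have "l \<in> negdual C" unfolding negdual_def topdual_def using l(1,2) lC by blast
            moreover have "l \<noteq> (\<lambda>_. 0)"
            proof
              assume "l = (\<lambda>_. 0)"
              hence "l a = 0" "l p = 0" by simp_all
              thus False using l(3,4) a(1) by fastforce
            qed
            ultimately show ?thesis by blast
          qed
          have low: "ereal (s - l p) \<le> phi f l x0" unfolding phi_def phi_set_def A_def[symmetric]
          proof (rule Inf_greatest)
            fix e assume "e \<in> (\<lambda>z. ereal (- l z)) ` A"
            then obtain a' where a': "a' \<in> A" "e = ereal (- l a')" by blast
            have "l a' \<le> l p - s" using l(4) a'(1) by blast
            thus "ereal (s - l p) \<le> e" using a'(2) by simp
          qed
          have up: "phi f l x0 \<le> ereal (- l a)" unfolding phi_def phi_set_def A_def[symmetric]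
            using a(1) by (intro Inf_lower) auto
          obtain r where r: "phi f l x0 = ereal r" using low up by (cases "phi f l x0") auto
          have "phi f l x0 \<noteq> - \<infinity>" using r by simp
          hence "0 \<le> phi_dir_deriv f l x0 (x - x0)" using H lneg by blast
          also have "\<dots> \<le> ereal (- l z)" by (rule deriv_bound[OF l(1,2) r z])
          finally have "l z \<le> 0" by simp
          moreover have "l p = l a + l z" using a(2) lin_add_r[OF l(1)] by simp
          moreover have "l a \<le> l p - s" using l(4) a(1) by blast
          ultimately show False using l(3) by linarith
        qed
      qed
    qed
  }
  {
    assume SR: "\<forall>zs \<in> negdual C - {(\<lambda>_. 0)}. \<forall>x u.
             phi_set zs (sv_dir_deriv f x u) = phi_dir_deriv f zs x u"
      and INC: "\<forall>x. sv_dir_deriv f x0 (x - x0) \<subseteq> recc (f x0)"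
    fix x zs assume zs: "zs \<in> negdual C - {(\<lambda>_. 0)}"
    show "phi f zs x0 = - \<infinity> \<or> 0 \<le> phi_dir_deriv f zs x0 (x - x0)"
    proof (cases "phi f zs x0 = - \<infinity>")
      case True thus ?thesis by simp
    next
      case False
      have lin: "linear zs" using zs unfolding negdual_def topdual_def by blast
      have "0 \<le> phi_set zs (sv_dir_deriv f x0 (x - x0))"
        using part2_aux[OF lin x0dom _ INC[rule_format, of x]] False unfolding phi_def by blast
      thus ?thesis using SR zs by simp
    qed
  }
qed

end
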